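(* Let $G$ be a group, $\nu$ a conjugation-invariant pseudo-norm on $G$, and $H\in\mathsf{FM}(G)$. For any $\hat\phi\in L(G,\nu)$, the function $\phi\colon G\to\mathbb{R}$, $\phi(g)=\hat\phi([g^1])$, is a homogeneous $H$-quasimorphism, and $D(\phi)\le 8\,l(\hat\phi)\cdot E_{H,\nu}(H)$, where $l(\hat\phi)$ is the optimal Lipschitz constant of $\hat\phi$.
   Context: A conjugation-invariant pseudo-norm on a group $G$ is a function $\nu\colon G\to\mathbb{R}_{\ge0}$ with $\nu(1)=0$, $\nu(f)=\nu(f^{-1})$, $\nu(fg)\le\nu(f)+\nu(g)$ and $\nu(gfg^{-1})=\nu(f)$ for all $f,g\in G$. For a subgroup $H\le G$, $\nu_H(f)$ is the minimal $k$ such that $f=g_1h_1g_1^{-1}\cdots g_kh_kg_k^{-1}$ ($g_i\in G,h_i\in H$), $\infty$ if none. A function $\phi\colon G\to\mathbb{R}$ is an $H$-quasimorphism if there is $C>0$ with $|\phi(fg)-\phi(f)-\phi(g)|<C\min\{\nu_H(f),\nu_H(g)\}$ for all $f,g$; the infimum of such $C$ is $D(\phi)$; $\phi$ is homogeneous if $\phi(f^n)=n\phi(f)$ for all $n\in\mathbb{Z}$. For $K\subset G$, $\mathrm{D}^f_H(K)$ is the set of $h_0\in G$ such that for all $g_1,\dots,g_k\in G$ there is $h\in G$ with every element of $hh_0h^{-1}K(hh_0h^{-1})^{-1}$ commuting with every element of $\bigcup_i g_iHg_i^{-1}$; $E_{H,\nu}(K)=\inf_{h_0\in\mathrm{D}^f_H(K)}\nu(h_0)$.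 $(G,H)$ satisfies $\mathsf{FM}$ if $\nu_H<\infty$ on $G$ and $\mathrm{D}^f_H(h_1Hh_1^{-1}\cup\dots\cup h_kHh_k^{-1})\ne\emptyset$ for all $h_1,\dots,h_k\in G$; $\mathsf{FM}(G)$ is the set of such subgroups $H$. $A_G=\coprod_{k\ge0}(G\times\mathbb{R})^k$, elements written as formal words $g_1^{s_1}\cdots g_k^{s_k}$, empty word $1$; $\mathtt{g}\cdot\mathtt{h}$ is concatenation, $\bar{\mathtt{g}}=g_k^{-s_k}\cdots g_1^{-s_1}$, $\mathtt{g}^{(\lambda)}=g_1^{\lambda s_1}\cdots g_k^{\lambda s_k}$; $\|\mathtt{g}\|_\nu=\lim_{n\to\infty}\frac1n\nu(g_1^{[s_1n]}\cdots g_k^{[s_kn]})$ ($[\cdot]$ integer part), $\|1\|_\nu=0$; $\mathtt{g}\sim\mathtt{h}$ iff $\|\mathtt{g}\cdot\bar{\mathtt{h}}\|_\nu=0$; $A_\nu=A_G/\sim$ is a real normed vector space with $[\mathtt{g}]+[\mathtt{h}]=[\mathtt{g}\cdot\mathtt{h}]$, $\lambda[\mathtt{g}]=[\mathtt{g}^{(\lambda)}]$, norm $\|[\mathtt{g}]\|_\nu=\|\mathtt{g}\|_\nu$. $L(G,\nu)$ is the set of Lipschitz continuous linear maps $A_\nu\to\mathbb{R}$; $[g^1]$ is the class of the one-letter word $g^1$. *)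

theory Defs
  imports "HOL-Algebra.Group" "HOL-Library.Extended_Nat" Complex_Main
begin

definition conj_pseudo_norm :: "('a, 'b) monoid_scheme \<Rightarrow> ('a \<Rightarrow> real) \<Rightarrow> bool" where
  "conj_pseudo_norm G \<nu> \<longleftrightarrow>
     (\<forall>f\<in>carrier G. \<nu> f \<ge> 0) \<and> \<nu> \<one>\<^bsub>G\<^esub> = 0 \<and>
     (\<forall>f\<in>carrier G. \<nu> (inv\<^bsub>G\<^esub> f) = \<nu> f) \<and>
     (\<forall>f\<in>carrier G. \<forall>g\<in>carrier G. \<nu> (f \<otimes>\<^bsub>G\<^esub> g) \<le> \<nu> f + \<nu> g) \<and>
     (\<forall>f\<in>carrier G. \<forall>g\<in>carrier G. \<nu> (g \<otimes>\<^bsub>G\<^esub> f \<otimes>\<^bsub>G\<^esub> inv\<^bsub>G\<^esub> g) = \<nu> f)"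

definition conj_prod :: "('a, 'b) monoid_scheme \<Rightarrow> ('a \<times> 'a) list \<Rightarrow> 'a" where
  "conj_prod G ps = foldr (\<lambda>(g, h) x. g \<otimes>\<^bsub>G\<^esub> h \<otimes>\<^bsub>G\<^esub> inv\<^bsub>G\<^esub> g \<otimes>\<^bsub>G\<^esub> x) ps \<one>\<^bsub>G\<^esub>"

text \<open>nu_H(f): minimal k, infinity if none (Inf of the empty set of enat is infinity).\<close>
definition nuH :: "('a, 'b) monoid_scheme \<Rightarrow> 'a set \<Rightarrow> 'a \<Rightarrow> enat" where
  "nuH G H f = Inf {enat (length ps) | ps. set ps \<subseteq> carrier G \<times> H \<and> f = conj_prod G ps}"

definition H_quasimorphism_bound :: "('a, 'b) monoid_scheme \<Rightarrow> 'a set \<Rightarrow> ('a \<Rightarrow> real) \<Rightarrow> real \<Rightarrow> bool" where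
  "H_quasimorphism_bound G H \<phi> C \<longleftrightarrow>
     (\<forall>f\<in>carrier G. \<forall>g\<in>carrier G. min (nuH G H f) (nuH G H g) \<noteq> \<infinity> \<longrightarrow>
        \<bar>\<phi> (f \<otimes>\<^bsub>G\<^esub> g) - \<phi> f - \<phi> g\<bar> \<le> C * real (the_enat (min (nuH G H f) (nuH G H g))))"

definition H_quasimorphism :: "('a, 'b) monoid_scheme \<Rightarrow> 'a set \<Rightarrow> ('a \<Rightarrow> real) \<Rightarrow> bool" where
  "H_quasimorphism G H \<phi> \<longleftrightarrow> (\<exists>C>0. H_quasimorphism_bound G H \<phi> C)"

definition qm_defect :: "('a, 'b) monoid_scheme \<Rightarrow> 'a set \<Rightarrow> ('a \<Rightarrow> real) \<Rightarrow> real" where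
  "qm_defect G H \<phi> = Inf {C. C > 0 \<and> H_quasimorphism_bound G H \<phi> C}"

definition homogeneous :: "('a, 'b) monoid_scheme \<Rightarrow> ('a \<Rightarrow> real) \<Rightarrow> bool" where
  "homogeneous G \<phi> \<longleftrightarrow> (\<forall>f\<in>carrier G. \<forall>n::int. \<phi> (f [^]\<^bsub>G\<^esub> n) = real_of_int n * \<phi> f)"

definition conj_set :: "('a, 'b) monoid_scheme \<Rightarrow> 'a \<Rightarrow> 'a set \<Rightarrow> 'a set" where
  "conj_set G g K = (\<lambda>k. g \<otimes>\<^bsub>G\<^esub> k \<otimes>\<^bsub>G\<^esub> inv\<^bsub>G\<^esub> g) ` K"

definition Df :: "('a, 'b) monoid_scheme \<Rightarrow> 'a set \<Rightarrow> 'a set \<Rightarrow> 'a set" where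
  "Df G H K = {h0 \<in> carrier G. \<forall>gs. set gs \<subseteq> carrier G \<longrightarrow>
      (\<exists>h\<in>carrier G. \<forall>x\<in>conj_set G (h \<otimes>\<^bsub>G\<^esub> h0 \<otimes>\<^bsub>G\<^esub> inv\<^bsub>G\<^esub> h) K.
          \<forall>y\<in>(\<Union>g\<in>set gs. conj_set G g H). x \<otimes>\<^bsub>G\<^esub> y = y \<otimes>\<^bsub>G\<^esub> x)}"

definition E_Hnu :: "('a, 'b) monoid_scheme \<Rightarrow> 'a set \<Rightarrow> ('a \<Rightarrow> real) \<Rightarrow> 'a set \<Rightarrow> real" where
  "E_Hnu G H \<nu> K = Inf (\<nu> ` Df G H K)"

definition FM :: "('a, 'b) monoid_scheme \<Rightarrow> 'a set \<Rightarrow> bool" where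
  "FM G H \<longleftrightarrow> subgroup H G \<and> (\<forall>f\<in>carrier G. nuH G H f \<noteq> \<infinity>) \<and>
     (\<forall>hs. set hs \<subseteq> carrier G \<longrightarrow> Df G H (\<Union>h\<in>set hs. conj_set G h H) \<noteq> {})"

text \<open>The space A_G of formal words g1^s1 ... gk^sk, as lists of pairs.\<close>
definition word :: "('a, 'b) monoid_scheme \<Rightarrow> ('a \<times> real) list \<Rightarrow> bool" where
  "word G w \<longleftrightarrow> set w \<subseteq> carrier G \<times> UNIV"

definition word_pow :: "('a, 'b) monoid_scheme \<Rightarrow> ('a \<times> real) list \<Rightarrow> nat \<Rightarrow> 'a" where
  "word_pow G w n = foldr (\<lambda>(g, s) x. (g [^]\<^bsub>G\<^esub> (\<lfloor>s * real n\<rfloor>)) \<otimes>\<^bsub>G\<^esub> x) w \<one>\<^bsub>G\<^esub>"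

definition wnorm :: "('a, 'b) monoid_scheme \<Rightarrow> ('a \<Rightarrow> real) \<Rightarrow> ('a \<times> real) list \<Rightarrow> real" where
  "wnorm G \<nu> w = lim (\<lambda>n. \<nu> (word_pow G w n) / real n)"

definition wbar :: "('a \<times> real) list \<Rightarrow> ('a \<times> real) list" where
  "wbar w = rev (map (\<lambda>(g, s). (g, - s)) w)"

definition wscale :: "real \<Rightarrow> ('a \<times> real) list \<Rightarrow> ('a \<times> real) list" where
  "wscale r w = map (\<lambda>(g, s). (g, r * s)) w"

definition is_lip_const :: "('a, 'b) monoid_scheme \<Rightarrow> ('a \<Rightarrow> real) \<Rightarrow> (('a \<times> real) list \<Rightarrow> real) \<Rightarrow> real \<Rightarrow> bool" where
  "is_lip_const G \<nu> \<psi> c \<longleftrightarrow> c \<ge> 0 \<and>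
     (\<forall>w w'. word G w \<longrightarrow> word G w' \<longrightarrow> \<bar>\<psi> w - \<psi> w'\<bar> \<le> c * wnorm G \<nu> (w @ wbar w'))"

text \<open>L(G,nu): Lipschitz linear maps A_nu -> R, represented by their lifts to words
  (functions on words constant on ~-classes, additive, homogeneous).\<close>
definition L_Gnu :: "('a, 'b) monoid_scheme \<Rightarrow> ('a \<Rightarrow> real) \<Rightarrow> (('a \<times> real) list \<Rightarrow> real) set" where
  "L_Gnu G \<nu> = {\<psi>.
     (\<forall>w w'. word G w \<longrightarrow> word G w' \<longrightarrow> wnorm G \<nu> (w @ wbar w') = 0 \<longrightarrow> \<psi> w = \<psi> w') \<and>
     (\<forall>w w'. word G w \<longrightarrow> word G w' \<longrightarrow> \<psi> (w @ w') = \<psi> w + \<psi> w') \<and>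
     (\<forall>w r. word G w \<longrightarrow> \<psi> (wscale r w) = r * \<psi> w) \<and>
     (\<exists>c. is_lip_const G \<nu> \<psi> c)}"

definition lip_const :: "('a, 'b) monoid_scheme \<Rightarrow> ('a \<Rightarrow> real) \<Rightarrow> (('a \<times> real) list \<Rightarrow> real) \<Rightarrow> real" where
  "lip_const G \<nu> \<psi> = Inf {c. is_lip_const G \<nu> \<psi> c}"

end

theory Submission
  imports Defs
begin

lemma fekete_aux:
  fixes a :: "nat \<Rightarrow> real"
  assumes sub: "\<And>n m. a (n+m) \<le> a n + a m"
  shows "a (q*m + r) \<le> real q * a m + a r"
proof (induction q)
  case 0 then show ?case by simp
next
  case (Suc q)
  have "a (Suc q * m + r) = a (m + (q*m + r))" by (simp add: add.assoc)
  also have "\<dots> \<le> a m + a (q*m+r)" by (rule sub)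
  also have "\<dots> \<le> a m + (real q * a m + a r)" using Suc by simp
  finally show ?case by (simp add: algebra_simps)
qed

lemma fekete:
  fixes a :: "nat \<Rightarrow> real"
  assumes nn: "\<And>n. a n \<ge> 0" and sub: "\<And>n m. a (n+m) \<le> a n + a m"
  shows "convergent (\<lambda>n. a n / real n)"
proof -
  define S where "S = {a n / real n | n. n \<ge> 1}"
  define L where "L = Inf S"
  have Sne: "S \<noteq> {}" unfolding S_def by auto
  have bdd: "bdd_below S" unfolding S_def using nn by (auto intro!: bdd_belowI[of _ 0])
  have low: "L \<le> a n / real n" if "n \<ge> 1" for n
    unfolding L_def by (rule cInf_lower[OF _ bdd]) (use that S_def in auto)
  have "(\<lambda>n. a n / real n) \<longlonglongrightarrow> L"
  proof (rule LIMSEQ_I)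
    fix r :: real assume r: "r > 0"
    have "Inf S < L + r/2" using r L_def by simp
    then obtain s where "s \<in> S" "s < L + r/2" using cInf_lessD[OF Sne] by blast
    then obtain m where m: "m \<ge> 1" "a m / real m < L + r/2" unfolding S_def by auto
    define T where "T = (\<Sum>k<m. a k)"
    have T: "a k \<le> T" if "k < m" for k
    proof -
      have "a k = (\<Sum>j\<in>{k}. a j)" by simp
      also have "\<dots> \<le> T" unfolding T_def by (rule sum_mono2) (use that nn in auto)
      finally show ?thesis .
    qed
    have T0: "T \<ge> 0" unfolding T_def using nn by (simp add: sum_nonneg)
    obtain no :: nat where no: "real no > 2*T/r" using reals_Archimedean2 by blast
    show "\<exists>no. \<forall>n\<ge>no. norm (a n / real n - L) < r"
    proof (intro exI[of _ "Suc no"] allI impI)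
      fix n assume n: "n \<ge> Suc no"
      have n1: "n \<ge> 1" using n by simp
      have npos: "real n > 0" using n1 by simp
      have dec: "a n \<le> real (n div m) * a m + a (n mod m)"
        using fekete_aux[of a "n div m" m "n mod m", OF sub] by simp
      have "a (n mod m) \<le> T" using T m by simp
      have dm: "real (n div m) * real m \<le> real n"
        by (metis of_nat_le_iff of_nat_mult div_times_less_eq_dividend)
      have "real (n div m) * a m = (real (n div m) * real m) * (a m / real m)"
        using m by (simp add: field_simps)
      also have "\<dots> \<le> real n * (a m / real m)"
        by (rule mult_right_mono[OF dm]) (use nn in simp)
      finally have "a n \<le> real n * (a m / real m) + T" using dec \<open>a (n mod m) \<le> T\<close> by linarith
      hence "a n / real n \<le> a m / real m + T / real n" using npos by (simp add: field_simps)
      moreover have "T / real n < r/2"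
      proof -
        have "real n > 2*T/r" using no n by linarith
        hence "2*T < real n * r" using r by (simp add: field_simps)
        thus ?thesis using npos by (simp add: field_simps)
      qed
      ultimately have "a n / real n < L + r" using m by linarith
      moreover have "L \<le> a n / real n" using low n1 by simp
      ultimately show "norm (a n / real n - L) < r" by simp
    qed
  qed
  thus ?thesis by (rule convergentI)
qed

lemma nuH_obtain:
  assumes "nuH G H f = enat k"
  shows "\<exists>ps. length ps = k \<and> set ps \<subseteq> carrier G \<times> H \<and> f = conj_prod G ps"
proof -
  define A where "A = {enat (length ps) | ps. set ps \<subseteq> carrier G \<times> H \<and> f = conj_prod G ps}"
  have N: "nuH G H f = Inf A" unfolding nuH_def A_def by simp
  have "A \<noteq> {}" using assms N by (auto simp: Inf_enat_def)
  then obtain x where "x \<in> A" by blast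
  hence "Inf A \<in> A" by (rule wellorder_InfI)
  thus ?thesis using assms N unfolding A_def by auto
qed

lemma nuH_fin_obtain:
  assumes "nuH G H f \<noteq> \<infinity>"
  shows "\<exists>ps. set ps \<subseteq> carrier G \<times> H \<and> f = conj_prod G ps"
proof -
  obtain k where "nuH G H f = enat k" using assms by auto
  from nuH_obtain[OF this] show ?thesis by blast
qed

lemma cpn_nonneg: "conj_pseudo_norm G \<nu> \<Longrightarrow> f \<in> carrier G \<Longrightarrow> \<nu> f \<ge> 0"
  unfolding conj_pseudo_norm_def by (elim conjE) (rule bspec)
lemma cpn_one: "conj_pseudo_norm G \<nu> \<Longrightarrow> \<nu> \<one>\<^bsub>G\<^esub> = 0"
  unfolding conj_pseudo_norm_def by (elim conjE)
lemma cpn_inv: "conj_pseudo_norm G \<nu> \<Longrightarrow> f \<in> carrier G \<Longrightarrow> \<nu> (inv\<^bsub>G\<^esub> f) = \<nu> f"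
  unfolding conj_pseudo_norm_def by (elim conjE) (rule bspec)
lemma cpn_tri: "conj_pseudo_norm G \<nu> \<Longrightarrow> f \<in> carrier G \<Longrightarrow> g \<in> carrier G \<Longrightarrow> \<nu> (f \<otimes>\<^bsub>G\<^esub> g) \<le> \<nu> f + \<nu> g"
  unfolding conj_pseudo_norm_def by (elim conjE) (erule ballE; erule ballE; simp)
lemma cpn_conj: "conj_pseudo_norm G \<nu> \<Longrightarrow> f \<in> carrier G \<Longrightarrow> g \<in> carrier G \<Longrightarrow> \<nu> (g \<otimes>\<^bsub>G\<^esub> f \<otimes>\<^bsub>G\<^esub> inv\<^bsub>G\<^esub> g) = \<nu> f"
  unfolding conj_pseudo_norm_def by (elim conjE) (erule ballE[where x=f]; erule ballE[where x=g]; simp)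

lemma fm_sub: "FM G H \<Longrightarrow> subgroup H G"
  unfolding FM_def by (rule conjunct1)
lemma fm_fin: "FM G H \<Longrightarrow> f \<in> carrier G \<Longrightarrow> nuH G H f \<noteq> \<infinity>"
  unfolding FM_def by (drule conjunct2, drule conjunct1, drule bspec, assumption, assumption)
lemma fm_df: "FM G H \<Longrightarrow> set hs \<subseteq> carrier G \<Longrightarrow> Df G H (\<Union>h\<in>set hs. conj_set G h H) \<noteq> {}"
  unfolding FM_def by (drule conjunct2, drule conjunct2, drule spec, erule mp)
lemma df_carrier: "h0 \<in> Df G H K \<Longrightarrow> h0 \<in> carrier G"
  unfolding Df_def mem_Collect_eq by (rule conjunct1)
lemma df_use: "h0 \<in> Df G H K \<Longrightarrow> set gs \<subseteq> carrier G \<Longrightarrow>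
   \<exists>h\<in>carrier G. \<forall>x\<in>conj_set G (h \<otimes>\<^bsub>G\<^esub> h0 \<otimes>\<^bsub>G\<^esub> inv\<^bsub>G\<^esub> h) K.
          \<forall>y\<in>(\<Union>g\<in>set gs. conj_set G g H). x \<otimes>\<^bsub>G\<^esub> y = y \<otimes>\<^bsub>G\<^esub> x"
  unfolding Df_def mem_Collect_eq by (drule conjunct2, drule spec, erule mp)
context group begin

lemma inv_cancel_l [simp]: "x \<in> carrier G \<Longrightarrow> y \<in> carrier G \<Longrightarrow> inv x \<otimes> (x \<otimes> y) = y"
  by (simp add: m_assoc[symmetric])
lemma inv_cancel_r [simp]: "x \<in> carrier G \<Longrightarrow> y \<in> carrier G \<Longrightarrow> x \<otimes> (inv x \<otimes> y) = y"
  by (simp add: m_assoc[symmetric])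

lemma comm_bound:
  assumes "conj_pseudo_norm G \<nu>" "p \<in> carrier G" "r \<in> carrier G"
  shows "\<nu> (p \<otimes> r \<otimes> inv p \<otimes> inv r) \<le> 2 * \<nu> r"
proof -
  have "\<nu> (p \<otimes> r \<otimes> inv p \<otimes> inv r) \<le> \<nu> (p \<otimes> r \<otimes> inv p) + \<nu> (inv r)"
    using assms by (intro cpn_tri) auto
  also have "\<dots> = 2 * \<nu> r" using assms cpn_conj[of G \<nu> r p] cpn_inv[of G \<nu> r] by simp
  finally show ?thesis .
qed

lemma comm_bound2:
  assumes "conj_pseudo_norm G \<nu>" "p \<in> carrier G" "r \<in> carrier G"
  shows "\<nu> (p \<otimes> r \<otimes> inv p \<otimes> inv r) \<le> 2 * \<nu> p"
proof -
  have e: "p \<otimes> r \<otimes> inv p \<otimes> inv r = p \<otimes> (r \<otimes> inv p \<otimes> inv r)" using assms by (simp add: m_assoc)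
  have "\<nu> (p \<otimes> (r \<otimes> inv p \<otimes> inv r)) \<le> \<nu> p + \<nu> (r \<otimes> inv p \<otimes> inv r)"
    using assms by (intro cpn_tri) auto
  also have "\<dots> = 2 * \<nu> p" using assms cpn_conj[of G \<nu> "inv p" r] cpn_inv[of G \<nu> p] by simp
  finally show ?thesis unfolding e .
qed

lemma conj_prod_closed:
  assumes "set ps \<subseteq> carrier G \<times> H" "H \<subseteq> carrier G"
  shows "conj_prod G ps \<in> carrier G"
  using assms(1)
proof (induction ps)
  case Nil then show ?case by (simp add: conj_prod_def)
next
  case (Cons a ps)
  obtain g h where a: "a = (g,h)" by force
  show ?case using Cons assms(2) unfolding a by (auto simp: conj_prod_def)
qed

lemma conj_prod_comm:
  assumes "set ps \<subseteq> carrier G \<times> H" "H \<subseteq> carrier G" "x \<in> carrier G"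
    and "\<forall>y\<in>(\<Union>g\<in>set (map fst ps). conj_set G g H). x \<otimes> y = y \<otimes> x"
  shows "x \<otimes> conj_prod G ps = conj_prod G ps \<otimes> x"
  using assms(1,4)
proof (induction ps)
  case Nil then show ?case using assms(3) by (simp add: conj_prod_def)
next
  case (Cons a ps)
  obtain g h where a: "a = (g,h)" by force
  have g: "g \<in> carrier G" and h: "h \<in> H" using Cons(2) a by auto
  have hc: "h \<in> carrier G" using h assms(2) by auto
  have P: "conj_prod G ps \<in> carrier G" using conj_prod_closed[OF _ assms(2)] Cons(2) by auto
  have y: "g \<otimes> h \<otimes> inv g \<in> (\<Union>g\<in>set (map fst (a#ps)). conj_set G g H)"
    using a h unfolding conj_set_def by force
  have c1: "x \<otimes> (g \<otimes> h \<otimes> inv g) = (g \<otimes> h \<otimes> inv g) \<otimes> x" using Cons(3) y by blast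
  have c2: "x \<otimes> conj_prod G ps = conj_prod G ps \<otimes> x" using Cons by auto
  have e: "conj_prod G (a#ps) = (g \<otimes> h \<otimes> inv g) \<otimes> conj_prod G ps" unfolding a conj_prod_def by simp
  define A where "A = g \<otimes> h \<otimes> inv g"
  have Ac: "A \<in> carrier G" unfolding A_def using g hc by auto
  have "x \<otimes> (A \<otimes> conj_prod G ps) = (x \<otimes> A) \<otimes> conj_prod G ps"
    using Ac P assms(3) by (simp add: m_assoc)
  also have "\<dots> = (A \<otimes> x) \<otimes> conj_prod G ps" using c1 unfolding A_def by simp
  also have "\<dots> = A \<otimes> (x \<otimes> conj_prod G ps)" using Ac P assms(3) by (simp add: m_assoc)
  also have "\<dots> = A \<otimes> (conj_prod G ps \<otimes> x)" using c2 by simp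
  also have "\<dots> = (A \<otimes> conj_prod G ps) \<otimes> x" using Ac P assms(3) by (simp add: m_assoc)
  finally show ?case unfolding e A_def .
qed

lemma key_comm:
  assumes nu: "conj_pseudo_norm G \<nu>" and fm: "FM G H"
    and h0: "h0 \<in> Df G H H" and p: "p \<in> carrier G" and q: "q \<in> H"
  shows "\<nu> (p \<otimes> q \<otimes> inv p \<otimes> inv q) \<le> 4 * \<nu> h0"
proof -
  have sg: "subgroup H G" using fm by (rule fm_sub)
  have Hc: "H \<subseteq> carrier G" using sg by (rule subgroup.subset)
  have qc: "q \<in> carrier G" using q Hc by auto
  have h0c: "h0 \<in> carrier G" using h0 by (rule df_carrier)
  have nfin: "nuH G H p \<noteq> \<infinity>" using fm p by (rule fm_fin)
  obtain ps where ps: "set ps \<subseteq> carrier G \<times> H" "p = conj_prod G ps" using nuH_fin_obtain[OF nfin] by blast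
  have gsc: "set (map fst ps) \<subseteq> carrier G" using ps by auto
  obtain h where hc: "h \<in> carrier G" and
    H: "\<forall>x\<in>conj_set G (h \<otimes> h0 \<otimes> inv h) H. \<forall>y\<in>(\<Union>g\<in>set (map fst ps). conj_set G g H). x \<otimes> y = y \<otimes> x"
    using df_use[OF h0 gsc] by (rule bexE)
  define u where "u = h \<otimes> h0 \<otimes> inv h"
  have uc: "u \<in> carrier G" unfolding u_def using hc h0c by auto
  have nuu: "\<nu> u = \<nu> h0" unfolding u_def using cpn_conj[OF nu h0c hc] .
  define q' where "q' = u \<otimes> q \<otimes> inv u"
  have q'c: "q' \<in> carrier G" unfolding q'_def using uc qc by auto
  have q'm: "q' \<in> conj_set G (h \<otimes> h0 \<otimes> inv h) H" unfolding q'_def conj_set_def u_def using q by auto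
  have call: "\<forall>y\<in>(\<Union>g\<in>set (map fst ps). conj_set G g H). q' \<otimes> y = y \<otimes> q'"
    using H q'm by (rule bspec)
  have cm: "q' \<otimes> p = p \<otimes> q'" unfolding ps(2) by (rule conj_prod_comm[OF ps(1) Hc q'c call])
  have c: "inv q' \<otimes> inv p = inv p \<otimes> inv q'"
  proof -
    have "inv (p \<otimes> q') = inv (q' \<otimes> p)" using cm by simp
    thus ?thesis using q'c p by (simp add: inv_mult_group)
  qed
  define r where "r = q \<otimes> inv q'"
  have rc: "r \<in> carrier G" unfolding r_def using qc q'c by auto
  have e: "p \<otimes> q \<otimes> inv p \<otimes> inv q = p \<otimes> r \<otimes> inv p \<otimes> inv r"
  proof -
    have "p \<otimes> r \<otimes> inv p \<otimes> inv r = p \<otimes> (q \<otimes> ((inv q' \<otimes> inv p) \<otimes> (q' \<otimes> inv q)))"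
      unfolding r_def using p qc q'c by (simp add: m_assoc inv_mult_group)
    also have "\<dots> = p \<otimes> (q \<otimes> (inv p \<otimes> (inv q' \<otimes> q') \<otimes> inv q))"
      unfolding c using p qc q'c by (simp add: m_assoc)
    also have "\<dots> = p \<otimes> q \<otimes> inv p \<otimes> inv q" using p qc q'c by (simp add: m_assoc)
    finally show ?thesis by simp
  qed
  have "\<nu> r \<le> 2 * \<nu> u"
  proof -
    have "r = q \<otimes> u \<otimes> inv q \<otimes> inv u" unfolding r_def q'_def using qc uc
      by (simp add: m_assoc inv_mult_group)
    thus ?thesis using comm_bound[OF nu qc uc] by simp
  qed
  thus ?thesis unfolding e using comm_bound[OF nu p rc] nuu by simp
qed

definition TT :: "'a \<Rightarrow> 'a \<Rightarrow> nat \<Rightarrow> 'a" where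
  "TT y g n = (y \<otimes> g) [^] n \<otimes> inv (g [^] n) \<otimes> inv (y [^] n)"

lemma TT_rec:
  assumes "y \<in> carrier G" "g \<in> carrier G"
  shows "TT y g (n+m) = TT y g n \<otimes> (y [^] n \<otimes>
     ((g [^] n \<otimes> TT y g m \<otimes> inv (g [^] n)) \<otimes>
      (g [^] n \<otimes> y [^] m \<otimes> inv (g [^] n) \<otimes> inv (y [^] m)))
     \<otimes> inv (y [^] n))"
proof -
  have yg: "y \<otimes> g \<in> carrier G" using assms by auto
  have p1: "(y \<otimes> g) [^] (n+m) = (y \<otimes> g) [^] n \<otimes> (y \<otimes> g) [^] m" using yg by (simp add: nat_pow_mult)
  have p2: "inv (g [^] (n+m)) = inv (g [^] m) \<otimes> inv (g [^] n)"
    using assms nat_pow_mult[of g n m] inv_mult_group[of "g [^] n" "g [^] m"] by simp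
  have p3: "inv (y [^] (n+m)) = inv (y [^] m) \<otimes> inv (y [^] n)"
    using assms nat_pow_mult[of y n m] inv_mult_group[of "y [^] n" "y [^] m"] by simp
  show ?thesis unfolding TT_def p1 p2 p3 using assms yg
    by (simp add: m_assoc)
qed

end
lemma inf_prod_bound:
  fixes A B :: "real set"
  assumes "A \<noteq> {}" "B \<noteq> {}" "\<forall>a\<in>A. a \<ge> 0" "\<forall>b\<in>B. b \<ge> 0"
    and H: "\<forall>a\<in>A. \<forall>b\<in>B. x \<le> 8 * a * b"
  shows "x \<le> 8 * Inf A * Inf B"
proof -
  have bA: "bdd_below A" using assms(3) by (auto intro!: bdd_belowI[of _ 0])
  have IA: "Inf A \<ge> 0" using assms(1,3) by (intro cInf_greatest) auto
  have step: "x \<le> 8 * Inf A * b" if b: "b \<in> B" for b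
  proof (cases "b = 0")
    case True
    obtain a where "a \<in> A" using assms(1) by blast
    hence "x \<le> 8*a*b" using H b by blast
    then show ?thesis using True by simp
  next
    case False
    hence bp: "b > 0" using assms(4) b by force
    have "x / (8*b) \<le> Inf A"
    proof (rule cInf_greatest[OF assms(1)])
      fix a assume "a \<in> A"
      hence "x \<le> 8*a*b" using H b by auto
      thus "x / (8*b) \<le> a" using bp by (simp add: field_simps)
    qed
    thus ?thesis using bp by (simp add: field_simps)
  qed
  show ?thesis
  proof (cases "Inf A = 0")
    case True
    obtain b where "b \<in> B" using assms(2) by blast
    then show ?thesis using step True by auto
  next
    case False
    hence p: "Inf A > 0" using IA by auto
    have "x / (8 * Inf A) \<le> Inf B"
    proof (rule cInf_greatest[OF assms(2)])
      fix b assume "b \<in> B"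
      hence "x \<le> 8 * Inf A * b" using step by auto
      thus "x / (8 * Inf A) \<le> b" using p by (simp add: field_simps mult.commute mult.left_commute)
    qed
    thus ?thesis using p by (simp add: field_simps)
  qed
qed

lemma fl_neg: "\<lfloor>- real n\<rfloor> = - int n"
  by (metis floor_of_int of_int_minus of_int_of_nat_eq)

locale qsetting = group G for G :: "('a, 'b) monoid_scheme" (structure) +
  fixes \<nu> :: "'a \<Rightarrow> real" and \<psi> :: "('a \<times> real) list \<Rightarrow> real" and H :: "'a set"
  assumes nu: "conj_pseudo_norm G \<nu>" and fm: "FM G H" and psi: "\<psi> \<in> L_Gnu G \<nu>"
begin

abbreviation phi where "phi g \<equiv> \<psi> [(g, 1)]"

lemma psi_class: "word G w \<Longrightarrow> word G w' \<Longrightarrow> wnorm G \<nu> (w @ wbar w') = 0 \<Longrightarrow> \<psi> w = \<psi> w'"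
  using psi[unfolded L_Gnu_def mem_Collect_eq, THEN conjunct1, rule_format] by this
lemma psi_add: "word G w \<Longrightarrow> word G w' \<Longrightarrow> \<psi> (w @ w') = \<psi> w + \<psi> w'"
  using psi unfolding L_Gnu_def by blast
lemma psi_scale: "word G w \<Longrightarrow> \<psi> (wscale r w) = r * \<psi> w"
  using psi unfolding L_Gnu_def by blast
lemma psi_lip: "is_lip_const G \<nu> \<psi> c \<Longrightarrow> word G w \<Longrightarrow> word G w' \<Longrightarrow>
    \<bar>\<psi> w - \<psi> w'\<bar> \<le> c * wnorm G \<nu> (w @ wbar w')"
  unfolding is_lip_const_def by (elim conjE) (drule spec[where x=w], drule spec[where x=w'], simp)

lemma Hc: "H \<subseteq> carrier G" using fm_sub[OF fm] by (rule subgroup.subset)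
lemma sg: "subgroup H G" using fm by (rule fm_sub)

lemma H_pow: "y \<in> H \<Longrightarrow> y [^] (n::nat) \<in> H"
  by (induction n) (auto simp: subgroup.one_closed[OF sg] subgroup.m_closed[OF sg])

lemma phi_conj:
  assumes a: "a \<in> carrier G" and b: "b \<in> carrier G"
  shows "phi (a \<otimes> b \<otimes> inv a) = phi b"
proof -
  have pw: "(a \<otimes> (b \<otimes> inv a)) [^] n = a \<otimes> (b [^] n \<otimes> inv a)" for n :: nat
    by (induction n) (use a b in \<open>simp_all add: m_assoc\<close>)
  have wp: "word_pow G ([(a \<otimes> b \<otimes> inv a, 1)] @ wbar [(b,1)]) n = a \<otimes> b [^] n \<otimes> inv a \<otimes> inv (b [^] n)" for n
    using a b by (simp add: word_pow_def wbar_def m_assoc pw int_pow_int int_pow_neg_int fl_neg)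
  define x where "x n = \<nu> (word_pow G ([(a \<otimes> b \<otimes> inv a, 1)] @ wbar [(b,1)]) n) / real n" for n
  have x0: "x n \<ge> 0" for n unfolding x_def wp using a b cpn_nonneg[OF nu] by auto
  have x1: "x n \<le> 2 * \<nu> a / real n" for n
    unfolding x_def wp using comm_bound2[OF nu a, of "b [^] n"] b by (simp add: divide_right_mono)
  have "x \<longlonglongrightarrow> 0"
    by (rule tendsto_sandwich[of "\<lambda>_. 0" x sequentially "\<lambda>n. 2 * \<nu> a / real n"])
       (use x0 x1 lim_const_over_n in auto)
  hence "wnorm G \<nu> ([(a \<otimes> b \<otimes> inv a, 1)] @ wbar [(b,1)]) = 0"
    unfolding wnorm_def x_def by (rule limI)
  thus ?thesis using a b by (intro psi_class) (auto simp: word_def)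
qed

lemma phi_pow:
  assumes f: "f \<in> carrier G"
  shows "phi (f [^] (k::int)) = real_of_int k * phi f"
proof -
  have wp: "word_pow G ([(f [^] k, 1)] @ wbar (wscale (real_of_int k) [(f,1)])) n = \<one>" for n
  proof -
    have "\<lfloor>- (real_of_int k * real n)\<rfloor> = - (k * int n)"
      by (metis floor_of_int of_int_minus of_int_mult of_int_of_nat_eq)
    thus ?thesis using f
      by (simp add: word_pow_def wbar_def wscale_def int_pow_int int_pow_pow int_pow_neg)
  qed
  have "wnorm G \<nu> ([(f [^] k, 1)] @ wbar (wscale (real_of_int k) [(f,1)])) = 0"
    unfolding wnorm_def wp cpn_one[OF nu] by (simp add: limI)
  hence "phi (f [^] k) = \<psi> (wscale (real_of_int k) [(f,1)])"
    using f by (intro psi_class) (auto simp: word_def wscale_def)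
  also have "\<dots> = real_of_int k * phi f" using f by (intro psi_scale) (auto simp: word_def)
  finally show ?thesis .
qed

lemma phi_one: "phi \<one> = 0"
  using phi_pow[of \<one> 0] by simp

lemma phi_comm:
  assumes "a \<in> carrier G" "b \<in> carrier G"
  shows "phi (a \<otimes> b) = phi (b \<otimes> a)"
proof -
  have e: "b \<otimes> (a \<otimes> b) \<otimes> inv b = b \<otimes> a" using assms by (simp add: m_assoc)
  have "phi (b \<otimes> (a \<otimes> b) \<otimes> inv b) = phi (a \<otimes> b)" by (rule phi_conj) (use assms in auto)
  thus ?thesis unfolding e by simp
qed

end
context qsetting begin

lemma core:
  assumes h0: "h0 \<in> Df G H H" and lip: "is_lip_const G \<nu> \<psi> c"
    and y: "y \<in> H" and g: "g \<in> carrier G"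
  shows "\<bar>phi (y \<otimes> g) - phi y - phi g\<bar> \<le> c * (4 * \<nu> h0)"
proof -
  have yc: "y \<in> carrier G" using y Hc by auto
  have h0c: "h0 \<in> carrier G" using h0 by (rule df_carrier)
  define K where "K = 4 * \<nu> h0"
  have K0: "K \<ge> 0" unfolding K_def using cpn_nonneg[OF nu h0c] by simp
  define x where "x n = \<nu> (TT y g n)" for n
  have TTc: "TT y g n \<in> carrier G" for n unfolding TT_def using yc g by auto
  have x0: "x n \<ge> 0" for n unfolding x_def using cpn_nonneg[OF nu TTc] .
  have Cb: "\<nu> (g [^] n \<otimes> y [^] m \<otimes> inv (g [^] n) \<otimes> inv (y [^] m)) \<le> K" for n m :: nat
    unfolding K_def by (rule key_comm[OF nu fm h0 nat_pow_closed[OF g] H_pow[OF y]])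
  have rec: "x (n+m) \<le> x n + x m + K" for n m
  proof -
    define C where "C = g [^] n \<otimes> y [^] m \<otimes> inv (g [^] n) \<otimes> inv (y [^] m)"
    define X where "X = (g [^] n \<otimes> TT y g m \<otimes> inv (g [^] n)) \<otimes> C"
    have Cc: "C \<in> carrier G" unfolding C_def using yc g by auto
    have Xc: "X \<in> carrier G" unfolding X_def using Cc TTc g by auto
    have "x (n+m) = \<nu> (TT y g n \<otimes> (y [^] n \<otimes> X \<otimes> inv (y [^] n)))"
      unfolding x_def X_def C_def using TT_rec[OF yc g] by simp
    also have "\<dots> \<le> x n + \<nu> (y [^] n \<otimes> X \<otimes> inv (y [^] n))"
      unfolding x_def by (rule cpn_tri[OF nu]) (use TTc Xc yc in auto)
    also have "\<nu> (y [^] n \<otimes> X \<otimes> inv (y [^] n)) = \<nu> X" using cpn_conj[OF nu Xc] yc by simp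
    also have "\<nu> X \<le> \<nu> (g [^] n \<otimes> TT y g m \<otimes> inv (g [^] n)) + \<nu> C"
      unfolding X_def by (rule cpn_tri[OF nu]) (use TTc Cc g in auto)
    also have "\<nu> (g [^] n \<otimes> TT y g m \<otimes> inv (g [^] n)) = x m"
      unfolding x_def using cpn_conj[OF nu TTc] g by simp
    finally show ?thesis using Cb[of n m] unfolding C_def by simp
  qed
  have TT1: "TT y g 1 = \<one>" unfolding TT_def using yc g by (simp add: m_assoc inv_mult_group)
  have TT0: "TT y g 0 = \<one>" unfolding TT_def by simp
  have xb: "x n \<le> real n * K" for n
  proof (induction n)
    case 0 then show ?case unfolding x_def TT0 cpn_one[OF nu] by simp
  next
    case (Suc n)
    have "x (n+1) \<le> x n + x 1 + K" by (rule rec)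
    moreover have "x 1 = 0" unfolding x_def TT1 cpn_one[OF nu] by simp
    ultimately show ?case using Suc by (simp add: algebra_simps)
  qed
  define a where "a n = x n + K" for n
  have "convergent (\<lambda>n. a n / real n)"
  proof (rule fekete)
    fix n m
    show "a (n+m) \<le> a n + a m" using rec[of n m] K0 unfolding a_def by linarith
    show "a n \<ge> 0" using x0[of n] K0 unfolding a_def by linarith
  qed
  moreover have "convergent (\<lambda>n. K / real n)" using lim_const_over_n by (rule convergentI)
  ultimately have "convergent (\<lambda>n. a n / real n - K / real n)" by (rule convergent_diff)
  moreover have "(\<lambda>n. a n / real n - K / real n) = (\<lambda>n. x n / real n)"
    unfolding a_def by (rule ext) (simp add: add_divide_distrib)
  ultimately have cv: "convergent (\<lambda>n. x n / real n)" by simp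
  have "lim (\<lambda>n. x n / real n) \<le> K"
  proof (rule LIMSEQ_le_const2)
    show "(\<lambda>n. x n / real n) \<longlonglongrightarrow> lim (\<lambda>n. x n / real n)" using cv by (simp add: convergent_LIMSEQ_iff)
    show "\<exists>N. \<forall>n\<ge>N. x n / real n \<le> K"
    proof (intro exI[of _ 1] allI impI)
      fix n :: nat assume "n \<ge> 1"
      thus "x n / real n \<le> K" using xb[of n] by (simp add: divide_le_eq mult.commute)
    qed
  qed
  moreover have wp: "word_pow G ([(y \<otimes> g, 1)] @ wbar [(y,1),(g,1)]) n = TT y g n" for n
    using yc g by (simp add: word_pow_def wbar_def TT_def m_assoc int_pow_int int_pow_neg_int fl_neg)
  ultimately have wn: "wnorm G \<nu> ([(y \<otimes> g, 1)] @ wbar [(y,1),(g,1)]) \<le> K"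
    unfolding wnorm_def wp x_def by simp
  have c0: "c \<ge> 0" using lip unfolding is_lip_const_def by simp
  have "\<bar>phi (y \<otimes> g) - \<psi> [(y,1),(g,1)]\<bar> \<le> c * wnorm G \<nu> ([(y \<otimes> g, 1)] @ wbar [(y,1),(g,1)])"
    by (rule psi_lip[OF lip]) (use yc g in \<open>auto simp: word_def\<close>)
  also have "\<dots> \<le> c * K" using wn c0 by (rule mult_left_mono)
  finally have "\<bar>phi (y \<otimes> g) - \<psi> [(y,1),(g,1)]\<bar> \<le> c * K" .
  moreover have "\<psi> [(y,1),(g,1)] = phi y + phi g"
    using psi_add[of "[(y,1)]" "[(g,1)]"] yc g by (simp add: word_def)
  ultimately show ?thesis unfolding K_def by simp
qed

lemma conj_step:
  assumes h0: "h0 \<in> Df G H H" and lip: "is_lip_const G \<nu> \<psi> c"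
    and a: "a \<in> carrier G" and q: "q \<in> H" and r: "r \<in> carrier G"
  shows "\<bar>phi (a \<otimes> q \<otimes> inv a \<otimes> r) - phi (a \<otimes> q \<otimes> inv a) - phi r\<bar> \<le> c * (4 * \<nu> h0)"
proof -
  have qc: "q \<in> carrier G" using q Hc by auto
  define r' where "r' = inv a \<otimes> r \<otimes> a"
  have r'c: "r' \<in> carrier G" unfolding r'_def using a r by auto
  have e1: "a \<otimes> q \<otimes> inv a \<otimes> r = a \<otimes> (q \<otimes> r') \<otimes> inv a"
    unfolding r'_def using a qc r by (simp add: m_assoc)
  have e2: "r = a \<otimes> r' \<otimes> inv a" unfolding r'_def using a r by (simp add: m_assoc)
  have "phi (a \<otimes> q \<otimes> inv a \<otimes> r) = phi (q \<otimes> r')" unfolding e1 by (rule phi_conj) (use a qc r'c in auto)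
  moreover have "phi (a \<otimes> q \<otimes> inv a) = phi q" by (rule phi_conj) (use a qc in auto)
  moreover have "phi r = phi r'" by (subst e2, rule phi_conj) (use a r'c in auto)
  ultimately show ?thesis using core[OF h0 lip q r'c] by simp
qed

lemma telescope:
  assumes h0: "h0 \<in> Df G H H" and lip: "is_lip_const G \<nu> \<psi> c"
    and ps: "set ps \<subseteq> carrier G \<times> H"
  shows "\<forall>r\<in>carrier G. \<bar>phi (conj_prod G ps \<otimes> r) - phi (conj_prod G ps) - phi r\<bar>
           \<le> 8 * c * \<nu> h0 * real (length ps)"
  using ps
proof (induction ps)
  case Nil
  show ?case by (simp add: conj_prod_def phi_one)
next
  case (Cons p ps)
  obtain a q where p: "p = (a,q)" by force
  have a: "a \<in> carrier G" and q: "q \<in> H" using Cons.prems p by auto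
  have qc: "q \<in> carrier G" using q Hc by auto
  define x where "x = a \<otimes> q \<otimes> inv a"
  define F where "F = conj_prod G ps"
  have xc: "x \<in> carrier G" unfolding x_def using a qc by auto
  have Fc: "F \<in> carrier G" unfolding F_def using conj_prod_closed[OF _ Hc] Cons.prems by auto
  have IH: "\<forall>r\<in>carrier G. \<bar>phi (F \<otimes> r) - phi F - phi r\<bar> \<le> 8 * c * \<nu> h0 * real (length ps)"
    using Cons unfolding F_def by auto
  have e: "conj_prod G (p # ps) = x \<otimes> F" unfolding p x_def F_def conj_prod_def by simp
  show ?case
  proof
    fix r assume r: "r \<in> carrier G"
    have s1: "\<bar>phi (x \<otimes> (F \<otimes> r)) - phi x - phi (F \<otimes> r)\<bar> \<le> c * (4 * \<nu> h0)"
      using conj_step[OF h0 lip a q, of "F \<otimes> r"] Fc r unfolding x_def by (simp add: m_assoc)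
    have s2: "\<bar>phi (x \<otimes> F) - phi x - phi F\<bar> \<le> c * (4 * \<nu> h0)"
      using conj_step[OF h0 lip a q Fc] unfolding x_def .
    have s3: "\<bar>phi (F \<otimes> r) - phi F - phi r\<bar> \<le> 8 * c * \<nu> h0 * real (length ps)" using IH r by blast
    have "x \<otimes> F \<otimes> r = x \<otimes> (F \<otimes> r)" using xc Fc r by (simp add: m_assoc)
    hence "\<bar>phi (x \<otimes> F \<otimes> r) - phi (x \<otimes> F) - phi r\<bar> \<le> 8 * c * \<nu> h0 * real (length (p # ps))"
      using s1 s2 s3 by (simp add: algebra_simps)
    thus "\<bar>phi (conj_prod G (p # ps) \<otimes> r) - phi (conj_prod G (p # ps)) - phi r\<bar>
           \<le> 8 * c * \<nu> h0 * real (length (p # ps))" unfolding e .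
  qed
qed

lemma qm_bound:
  assumes h0: "h0 \<in> Df G H H" and lip: "is_lip_const G \<nu> \<psi> c" and C: "C \<ge> 8 * c * \<nu> h0"
  shows "H_quasimorphism_bound G H phi C"
  unfolding H_quasimorphism_bound_def
proof (intro ballI impI)
  fix f g assume f: "f \<in> carrier G" and g: "g \<in> carrier G" and fin: "min (nuH G H f) (nuH G H g) \<noteq> \<infinity>"
  obtain k where k: "min (nuH G H f) (nuH G H g) = enat k" using fin by auto
  have mono: "8 * c * \<nu> h0 * real k \<le> C * real k" using C by (simp add: mult_right_mono)
  show "\<bar>phi (f \<otimes> g) - phi f - phi g\<bar> \<le> C * real (the_enat (min (nuH G H f) (nuH G H g)))"
  proof (cases "nuH G H f \<le> nuH G H g")
    case True
    hence nk: "nuH G H f = enat k" using k by (simp add: min_def)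
    obtain ps where ps: "length ps = k" "set ps \<subseteq> carrier G \<times> H" "f = conj_prod G ps"
      using nuH_obtain[OF nk] by blast
    have T: "\<forall>r\<in>carrier G. \<bar>phi (f \<otimes> r) - phi f - phi r\<bar> \<le> 8 * c * \<nu> h0 * real k"
      using telescope[OF h0 lip ps(2)] unfolding ps(3)[symmetric] ps(1) .
    have "\<bar>phi (f \<otimes> g) - phi f - phi g\<bar> \<le> 8 * c * \<nu> h0 * real k"
      using T g by blast
    thus ?thesis using k mono by simp
  next
    case False
    hence nk: "nuH G H g = enat k" using k by (simp add: min_def)
    obtain ps where ps: "length ps = k" "set ps \<subseteq> carrier G \<times> H" "g = conj_prod G ps"
      using nuH_obtain[OF nk] by blast
    have T: "\<forall>r\<in>carrier G. \<bar>phi (g \<otimes> r) - phi g - phi r\<bar> \<le> 8 * c * \<nu> h0 * real k"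
      using telescope[OF h0 lip ps(2)] unfolding ps(3)[symmetric] ps(1) .
    have "\<bar>phi (g \<otimes> f) - phi g - phi f\<bar> \<le> 8 * c * \<nu> h0 * real k"
      using T f by blast
    moreover have "phi (f \<otimes> g) = phi (g \<otimes> f)" using phi_comm f g by simp
    ultimately show ?thesis using k mono by simp
  qed
qed

lemma Df_ne: "Df G H H \<noteq> {}"
proof -
  have "conj_set G \<one> H = H" unfolding conj_set_def using Hc by (auto simp: image_iff) (metis l_one r_one subsetD)
  hence e: "(\<Union>h\<in>set [\<one>]. conj_set G h H) = H" by simp
  have "set [\<one>] \<subseteq> carrier G" by simp
  hence "Df G H (\<Union>h\<in>set [\<one>]. conj_set G h H) \<noteq> {}" by (rule fm_df[OF fm])
  thus ?thesis unfolding e .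
qed

lemma main:
  "H_quasimorphism G H phi \<and> homogeneous G phi \<and>
   qm_defect G H phi \<le> 8 * lip_const G \<nu> \<psi> * E_Hnu G H \<nu> H"
proof (intro conjI)
  obtain c where lip: "is_lip_const G \<nu> \<psi> c" using psi unfolding L_Gnu_def by blast
  obtain h0 where h0: "h0 \<in> Df G H H" using Df_ne by blast
  have h0c: "h0 \<in> carrier G" using h0 by (rule df_carrier)
  have c0: "c \<ge> 0" using lip unfolding is_lip_const_def by simp
  have n0: "\<nu> h0 \<ge> 0" using cpn_nonneg[OF nu h0c] .
  have pos: "0 < 8 * c * \<nu> h0 + 1" using c0 n0 by (intro add_nonneg_pos mult_nonneg_nonneg) auto
  show "H_quasimorphism G H phi" unfolding H_quasimorphism_def
    by (rule exI[of _ "8 * c * \<nu> h0 + 1"]) (use qm_bound[OF h0 lip] pos in auto)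
  show "homogeneous G phi" unfolding homogeneous_def using phi_pow by auto
  have D: "qm_defect G H phi \<le> 8 * c * e" if lipc: "is_lip_const G \<nu> \<psi> c" and e: "e \<in> \<nu> ` Df G H H" for c e
  proof -
    obtain h where h: "h \<in> Df G H H" "e = \<nu> h" using e by blast
    define S where "S = {C. C > 0 \<and> H_quasimorphism_bound G H phi C}"
    have bS: "bdd_below S" unfolding S_def by (auto intro!: bdd_belowI[of _ 0])
    have hc: "h \<in> carrier G" using h(1) by (rule df_carrier)
    have "qm_defect G H phi \<le> 8 * c * e + d" if d: "d > 0" for d
    proof -
      have cc: "c \<ge> 0" using lipc unfolding is_lip_const_def by simp
      have ee: "e \<ge> 0" using cpn_nonneg[OF nu hc] h(2) by simp
      have ce: "8 * c * e \<ge> 0" using cc ee by simp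
      have "8 * c * e + d > 0" using ce d by linarith
      moreover have "H_quasimorphism_bound G H phi (8 * c * e + d)"
        by (rule qm_bound[OF h(1) lipc]) (use h(2) d in simp)
      ultimately have "8 * c * e + d \<in> S" unfolding S_def by blast
      thus ?thesis unfolding qm_defect_def S_def[symmetric] by (rule cInf_lower[OF _ bS])
    qed
    thus ?thesis by (rule field_le_epsilon)
  qed
  show "qm_defect G H phi \<le> 8 * lip_const G \<nu> \<psi> * E_Hnu G H \<nu> H"
    unfolding lip_const_def E_Hnu_def
  proof (rule inf_prod_bound)
    show "{c. is_lip_const G \<nu> \<psi> c} \<noteq> {}" using lip by blast
    show "\<nu> ` Df G H H \<noteq> {}" using Df_ne by blast
    show "\<forall>a\<in>{c. is_lip_const G \<nu> \<psi> c}. 0 \<le> a" unfolding is_lip_const_def by blast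
    have DfC: "Df G H H \<subseteq> carrier G" by (rule subsetI, rule df_carrier)
    show "\<forall>b\<in>\<nu> ` Df G H H. 0 \<le> b" using DfC cpn_nonneg[OF nu] by blast
    show "\<forall>a\<in>{c. is_lip_const G \<nu> \<psi> c}. \<forall>b\<in>\<nu> ` Df G H H. qm_defect G H phi \<le> 8 * a * b"
      using D by blast
  qed
qed

end
theorem proposition2p5:
  fixes G :: "('a, 'b) monoid_scheme" and \<nu> :: "'a \<Rightarrow> real" and H :: "'a set"
    and \<psi> :: "('a \<times> real) list \<Rightarrow> real"
  assumes "group G"
    and "conj_pseudo_norm G \<nu>"
    and "FM G H"
    and "\<psi> \<in> L_Gnu G \<nu>"
  defines "\<phi> \<equiv> (\<lambda>g. \<psi> [(g, 1)])"
  shows "H_quasimorphism G H \<phi> \<and> homogeneous G \<phi> \<and>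
         qm_defect G H \<phi> \<le> 8 * lip_const G \<nu> \<psi> * E_Hnu G H \<nu> H"
proof -
  interpret qsetting G \<nu> \<psi> H
    unfolding qsetting_def qsetting_axioms_def using assms(1-4) by blast
  show ?thesis unfolding \<phi>_def using main by simp
qed

end
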